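(* For any integers $s\ge1$ and $M\ge1$ there exists $\varepsilon>0$ small enough such that on the star graph $G(s,\varepsilon)$ the following hold for the Laplacian $-\frac{\partial^2}{\partial x^2}$: (a) the first $M$ eigenvalues are all simple; (b) the first $M$ eigenfunctions are invariant under permutations of the $s$ small edges; (c) for every $n\le M$, the eigenfunction $f_n$ has exactly $n-1$ zeroes on the long edge and no zeroes on the small edges or at the inner vertex.
   Context: $G(s,\varepsilon)$ is the star graph with one central vertex, one edge of length $1$ and $s$ edges of length $\varepsilon$, each joining the central vertex to a degree-one vertex. The operator $-\frac{d^2}{dx^2}$ acts edgewise with Dirichlet conditions at the degree-one vertices and Neumann–Kirchhoff conditions at the central vertex (continuity and vanishing sum of outgoing derivatives). Eigenvalues are ordered increasingly with multiplicity, $f_n$ being an eigenfunction for the $n$-th one. Zeroes are counted away from the degree-one vertices. *)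

theory Defs
  imports "HOL-Analysis.Analysis" "HOL-Combinatorics.Permutations"
begin

text \<open>Each edge j is parametrised by t in [0, edge_len eps j], t = 0 being the
  central vertex and t = edge_len eps j the degree-one vertex.
  A function on the graph is f :: nat => real => real, f j being its
  restriction to edge j.\<close>

definition edge_len :: "real \<Rightarrow> nat \<Rightarrow> real" where
  "edge_len eps j = (if j = 0 then 1 else eps)"

definition star_eigenfunction ::
  "nat \<Rightarrow> real \<Rightarrow> real \<Rightarrow> (nat \<Rightarrow> real \<Rightarrow> real) \<Rightarrow> bool" where
  "star_eigenfunction s eps lam f \<longleftrightarrow>
     (\<exists>f'. (\<forall>j\<le>s. \<forall>x\<in>{0..edge_len eps j}.
              (f j has_real_derivative f' j x) (at x within {0..edge_len eps j}) \<and>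
              (f' j has_real_derivative (- lam * f j x)) (at x within {0..edge_len eps j}))
          \<and> (\<forall>j\<le>s. f j (edge_len eps j) = 0)
          \<and> (\<forall>j\<le>s. f j 0 = f 0 0)
          \<and> (\<Sum>j\<le>s. f' j 0) = 0)
     \<and> (\<exists>j\<le>s. \<exists>x\<in>{0..edge_len eps j}. f j x \<noteq> 0)"

definition star_eigenvalue :: "nat \<Rightarrow> real \<Rightarrow> real \<Rightarrow> bool" where
  "star_eigenvalue s eps lam \<longleftrightarrow> (\<exists>f. star_eigenfunction s eps lam f)"

definition star_simple_eigenvalue :: "nat \<Rightarrow> real \<Rightarrow> real \<Rightarrow> bool" where
  "star_simple_eigenvalue s eps lam \<longleftrightarrow> star_eigenvalue s eps lam \<and>
     (\<forall>f g. star_eigenfunction s eps lam f \<longrightarrow> star_eigenfunction s eps lam g \<longrightarrow>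
        (\<exists>c. \<forall>j\<le>s. \<forall>x\<in>{0..edge_len eps j}. g j x = c * f j x))"

end

theory Submission
  imports Defs
begin

lemma energy_zero:
  fixes u u' :: "real \<Rightarrow> real" and L lam :: real
  assumes L: "0 \<le> L"
  and d: "\<forall>x\<in>{0..L}. (u has_real_derivative u' x) (at x within {0..L}) \<and>
             (u' has_real_derivative (- lam * u x)) (at x within {0..L})"
  and uL: "u L = 0" and u'L: "u' L = 0"
  shows "\<forall>x\<in>{0..L}. u x = 0 \<and> u' x = 0"
proof -
  define c where "c = \<bar>1 - lam\<bar>"
  define E where "E x = exp (c*x) * ((u' x)^2 + (u x)^2)" for x
  define D where "D x = exp (c*x) * (c * ((u' x)^2 + (u x)^2) + 2*(1-lam) * u x * u' x)" for x
  have dE: "(E has_real_derivative D x) (at x within {0..L})" if "x \<in> {0..L}" for x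
  proof -
    from d that have 1: "(u has_real_derivative u' x) (at x within {0..L})"
      and 2: "(u' has_real_derivative (- lam * u x)) (at x within {0..L})" by auto
    have "(E has_real_derivative exp(c*x)*c * ((u' x)^2 + (u x)^2)
          + exp(c*x) * (2*u' x*(-lam*u x) + 2*u x*u' x)) (at x within {0..L})"
      unfolding E_def
      by (auto intro!: derivative_eq_intros 1 2 simp: power2_eq_square)
    then show ?thesis by (simp add: D_def algebra_simps)
  qed
  have Dnn: "D x \<ge> 0" for x
  proof -
    have sq: "0 \<le> (\<bar>u x\<bar> - \<bar>u' x\<bar>)^2" by simp
    have a: "2 * \<bar>u x * u' x\<bar> \<le> (u' x)^2 + (u x)^2"
      using sq by (simp add: power2_eq_square algebra_simps abs_mult)
    have b: "- (2*(1-lam) * u x * u' x) \<le> c * (2 * \<bar>u x * u' x\<bar>)"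
    proof -
      have "- (2*(1-lam) * u x * u' x) \<le> \<bar>2*(1-lam) * u x * u' x\<bar>" by simp
      also have "\<dots> = \<bar>(1-lam) * (2*(u x*u' x))\<bar>" by (simp add: algebra_simps)
      also have "\<dots> = c * (2 * \<bar>u x * u' x\<bar>)" unfolding c_def by (simp add: abs_mult)
      finally show ?thesis .
    qed
    have "c * (2 * \<bar>u x * u' x\<bar>) \<le> c * ((u' x)^2 + (u x)^2)"
      using a unfolding c_def by (simp add: mult_left_mono)
    with b have "0 \<le> c * ((u' x)^2 + (u x)^2) + 2*(1-lam) * u x * u' x" by linarith
    then show ?thesis unfolding D_def by simp
  qed
  have cont: "continuous_on {0..L} E"
    using dE DERIV_continuous continuous_on_eq_continuous_within by blast
  have inc: "E x \<le> E L" if x: "x \<in> {0..L}" for x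
  proof (rule DERIV_nonneg_imp_increasing_open[of x L E])
    show "x \<le> L" using x by simp
    show "continuous_on {x..L} E" by (rule continuous_on_subset[OF cont]) (use x in auto)
    fix y assume "x < y" "y < L"
    then have "DERIV E y :> D y" using dE[of y] x at_within_Icc_at[of 0 y L] by auto
    then show "\<exists>z. DERIV E y :> z \<and> z \<ge> 0" using Dnn by blast
  qed
  have EL: "E L = 0" unfolding E_def using uL u'L by simp
  show ?thesis
  proof
    fix x assume x: "x \<in> {0..L}"
    have "E x \<le> 0" using inc[OF x] EL by simp
    then have "(u' x)^2 + (u x)^2 \<le> 0" unfolding E_def
      by (simp add: mult_le_0_iff)
    then show "u x = 0 \<and> u' x = 0"
      by (smt (verit) zero_le_power2 power_zero_numeral zero_less_power2)
  qed
qed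

lemma form_lemma:
  fixes f f' phi phi' :: "real \<Rightarrow> real" and L lam :: real
  assumes L: "0 \<le> L"
  and d: "\<forall>x\<in>{0..L}. (f has_real_derivative f' x) (at x within {0..L}) \<and>
             (f' has_real_derivative (- lam * f x)) (at x within {0..L})"
  and fL: "f L = 0"
  and p: "\<forall>x. (phi has_real_derivative phi' x) (at x) \<and> (phi' has_real_derivative (- lam * phi x)) (at x)"
  and pL: "phi L = 0" "phi' L = -1"
  shows "\<forall>x\<in>{0..L}. f x = - f' L * phi x \<and> f' x = - f' L * phi' x"
proof -
  define a where "a = f' L"
  have "\<forall>x\<in>{0..L}. (\<lambda>x. f x + a * phi x) x = 0 \<and> (\<lambda>x. f' x + a * phi' x) x = 0"
  proof (rule energy_zero[OF L, where lam=lam])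
    show "\<forall>x\<in>{0..L}. ((\<lambda>x. f x + a * phi x) has_real_derivative (f' x + a * phi' x)) (at x within {0..L}) \<and>
      ((\<lambda>x. f' x + a * phi' x) has_real_derivative - lam * (f x + a * phi x)) (at x within {0..L})"
    proof
      fix x assume x: "x \<in> {0..L}"
      have 1: "(f has_real_derivative f' x) (at x within {0..L})"
        and 2: "(f' has_real_derivative (- lam * f x)) (at x within {0..L})" using d x by auto
      have 3: "(phi has_real_derivative phi' x) (at x within {0..L})"
        and 4: "(phi' has_real_derivative (- lam * phi x)) (at x within {0..L})"
        using p has_field_derivative_at_within by blast+
      show "((\<lambda>x. f x + a * phi x) has_real_derivative (f' x + a * phi' x)) (at x within {0..L}) \<and>
      ((\<lambda>x. f' x + a * phi' x) has_real_derivative - lam * (f x + a * phi x)) (at x within {0..L})"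
        by (auto intro!: derivative_eq_intros 1 2 3 4 simp: algebra_simps)
    qed
    show "(\<lambda>x. f x + a * phi x) L = 0" using fL pL by simp
    show "(\<lambda>x. f' x + a * phi' x) L = 0" using pL a_def by simp
  qed
  then show ?thesis unfolding a_def by (auto simp: algebra_simps)
qed

lemma edge_len_pos: "eps > 0 \<Longrightarrow> edge_len eps j > 0"
  by (simp add: edge_len_def)

lemma eig_structure:
  fixes phi phi' :: "real \<Rightarrow> real \<Rightarrow> real"
  assumes eps: "eps > 0" and ef: "star_eigenfunction s eps lam f"
  and p: "\<forall>L x. (phi L has_real_derivative phi' L x) (at x) \<and>
                 (phi' L has_real_derivative (- lam * phi L x)) (at x)"
  and pL: "\<forall>L. phi L L = 0 \<and> phi' L L = -1"
  shows "\<exists>a. (\<forall>j\<le>s. \<forall>x\<in>{0..edge_len eps j}. f j x = a j * phi (edge_len eps j) x)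
     \<and> (\<forall>j\<le>s. a j * phi (edge_len eps j) 0 = a 0 * phi 1 0)
     \<and> (\<Sum>j\<le>s. a j * phi' (edge_len eps j) 0) = 0
     \<and> (\<exists>j\<le>s. a j \<noteq> 0)"
proof -
  have ex: "\<exists>f'. (\<forall>j\<le>s. \<forall>x\<in>{0..edge_len eps j}.
              (f j has_real_derivative f' j x) (at x within {0..edge_len eps j}) \<and>
              (f' j has_real_derivative (- lam * f j x)) (at x within {0..edge_len eps j}))
          \<and> (\<forall>j\<le>s. f j (edge_len eps j) = 0)
          \<and> (\<forall>j\<le>s. f j 0 = f 0 0)
          \<and> (\<Sum>j\<le>s. f' j 0) = 0"
    using ef unfolding star_eigenfunction_def by (rule conjunct1)
  have nz: "\<exists>j\<le>s. \<exists>x\<in>{0..edge_len eps j}. f j x \<noteq> 0"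
    using ef unfolding star_eigenfunction_def by (rule conjunct2)
  from ex obtain f' :: "nat \<Rightarrow> real \<Rightarrow> real" where H: "(\<forall>j\<le>s. \<forall>x\<in>{0..edge_len eps j}.
              (f j has_real_derivative f' j x) (at x within {0..edge_len eps j}) \<and>
              (f' j has_real_derivative (- lam * f j x)) (at x within {0..edge_len eps j}))
          \<and> (\<forall>j\<le>s. f j (edge_len eps j) = 0)
          \<and> (\<forall>j\<le>s. f j 0 = f 0 0)
          \<and> (\<Sum>j\<le>s. f' j 0) = 0" by (rule exE)
  note d = H[THEN conjunct1]
  note Dir = H[THEN conjunct2, THEN conjunct1]
  note cont = H[THEN conjunct2, THEN conjunct2, THEN conjunct1]
  note K = H[THEN conjunct2, THEN conjunct2, THEN conjunct2]
  define a where "a j = - f' j (edge_len eps j)" for j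
  have form: "\<forall>x\<in>{0..edge_len eps j}. f j x = a j * phi (edge_len eps j) x \<and>
      f' j x = a j * phi' (edge_len eps j) x" if j: "j \<le> s" for j
  proof -
    have L0: "0 \<le> edge_len eps j" using edge_len_pos[OF eps, of j] by linarith
    have dj: "\<forall>x\<in>{0..edge_len eps j}. (f j has_real_derivative f' j x) (at x within {0..edge_len eps j}) \<and>
             (f' j has_real_derivative (- lam * f j x)) (at x within {0..edge_len eps j})"
      using d j by blast
    have Dj: "f j (edge_len eps j) = 0" using Dir j by blast
    have pj: "\<forall>x. (phi (edge_len eps j) has_real_derivative phi' (edge_len eps j) x) (at x) \<and>
       (phi' (edge_len eps j) has_real_derivative (- lam * phi (edge_len eps j) x)) (at x)"
      using p by blast
    have pLj: "phi (edge_len eps j) (edge_len eps j) = 0" "phi' (edge_len eps j) (edge_len eps j) = -1"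
      using pL by blast+
    have "\<forall>x\<in>{0..edge_len eps j}. f j x = - f' j (edge_len eps j) * phi (edge_len eps j) x \<and>
      f' j x = - f' j (edge_len eps j) * phi' (edge_len eps j) x"
      by (rule form_lemma[OF L0 dj Dj pj pLj])
    then show ?thesis unfolding a_def .
  qed
  have z: "0 \<in> {0..edge_len eps j}" for j using edge_len_pos[OF eps, of j] by simp
  have e0: "edge_len eps 0 = 1" by (simp add: edge_len_def)
  have f0: "f j 0 = a j * phi (edge_len eps j) 0" if "j \<le> s" for j
    using bspec[OF form[OF that] z[of j]] by (rule conjunct1)
  have f'0: "f' j 0 = a j * phi' (edge_len eps j) 0" if "j \<le> s" for j
    using bspec[OF form[OF that] z[of j]] by (rule conjunct2)
  show ?thesis
  proof (intro exI[of _ a] conjI)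
    show "\<forall>j\<le>s. \<forall>x\<in>{0..edge_len eps j}. f j x = a j * phi (edge_len eps j) x"
    proof (intro allI impI ballI)
      fix j x assume "j \<le> s" "x \<in> {0..edge_len eps j}"
      from bspec[OF form[OF this(1)] this(2)] show "f j x = a j * phi (edge_len eps j) x" by (rule conjunct1)
    qed
    show "\<forall>j\<le>s. a j * phi (edge_len eps j) 0 = a 0 * phi 1 0"
    proof (intro allI impI)
      fix j assume j: "j \<le> s"
      have "a j * phi (edge_len eps j) 0 = f j 0" using f0[OF j] by simp
      also have "\<dots> = f 0 0" using cont j by blast
      also have "\<dots> = a 0 * phi 1 0" using f0[of 0] e0 by simp
      finally show "a j * phi (edge_len eps j) 0 = a 0 * phi 1 0" .
    qed
    have "(\<Sum>j\<le>s. a j * phi' (edge_len eps j) 0) = (\<Sum>j\<le>s. f' j 0)"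
      using f'0 by (intro sum.cong) auto
    then show "(\<Sum>j\<le>s. a j * phi' (edge_len eps j) 0) = 0" using K by simp
    from nz obtain j x where jx: "j \<le> s" "x \<in> {0..edge_len eps j}" "f j x \<noteq> 0" by blast
    have "f j x = a j * phi (edge_len eps j) x"
      using bspec[OF form[OF jx(1)] jx(2)] by (rule conjunct1)
    with jx show "\<exists>j\<le>s. a j \<noteq> 0" by auto
  qed
qed

lemma sign_lemma:
  fixes a p q :: "nat \<Rightarrow> real"
  assumes "\<forall>j\<le>s. p j > 0" "\<forall>j\<le>s. q j < 0" "\<forall>j\<le>s. a j * p j = c"
    "(\<Sum>j\<le>s. a j * q j) = 0"
  shows "\<forall>j\<le>s. a j = 0"
proof -
  have aj: "a j = c / p j" if "j \<le> s" for j
  proof -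
    have "p j \<noteq> 0" using assms(1) that by force
    then show ?thesis using assms(3) that by (simp add: eq_divide_eq)
  qed
  have "(\<Sum>j\<le>s. a j * q j) = (\<Sum>j\<le>s. c * (q j / p j))"
    using aj by (intro sum.cong) auto
  also have "\<dots> = c * (\<Sum>j\<le>s. q j / p j)" by (simp add: sum_distrib_left)
  finally have "c * (\<Sum>j\<le>s. q j / p j) = 0" using assms(4) by simp
  moreover have "(\<Sum>j\<le>s. - (q j / p j)) > 0"
    using assms(1,2) by (intro sum_pos) (auto simp: divide_neg_pos)
  then have "(\<Sum>j\<le>s. q j / p j) \<noteq> 0" by (simp add: sum_negf)
  ultimately have "c = 0" by simp
  then show ?thesis using aj by simp
qed

lemma nonpos_not_eig:
  assumes eps: "eps > 0" and lam: "lam \<le> 0"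
  shows "\<not> star_eigenfunction s eps lam f"
proof
  assume ef: "star_eigenfunction s eps lam f"
  have Lp: "\<forall>j\<le>s. edge_len eps j > 0" using edge_len_pos[OF eps] by blast
  show False
  proof (cases "lam = 0")
    case True
    define phi where "phi L x = L - x" for L x :: real
    define phi' where "phi' L x = (-1::real)" for L x :: real
    have p: "\<forall>L x. (phi L has_real_derivative phi' L x) (at x) \<and>
                 (phi' L has_real_derivative (- lam * phi L x)) (at x)"
      unfolding phi_def phi'_def True by (auto intro!: derivative_eq_intros)
    have pL: "\<forall>L. phi L L = 0 \<and> phi' L L = -1" unfolding phi_def phi'_def by simp
    obtain a where A: "\<forall>j\<le>s. a j * phi (edge_len eps j) 0 = a 0 * phi 1 0"
      "(\<Sum>j\<le>s. a j * phi' (edge_len eps j) 0) = 0" "\<exists>j\<le>s. a j \<noteq> 0"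
      using eig_structure[OF eps ef p pL] by blast
    have "\<forall>j\<le>s. a j = 0"
    proof (rule sign_lemma[where p="\<lambda>j. phi (edge_len eps j) 0" and q="\<lambda>j. phi' (edge_len eps j) 0"])
      show "\<forall>j\<le>s. 0 < phi (edge_len eps j) 0" using Lp unfolding phi_def by simp
      show "\<forall>j\<le>s. phi' (edge_len eps j) 0 < 0" unfolding phi'_def by simp
    qed (rule A(1), rule A(2))
    with A(3) show False by blast
  next
    case False
    with lam have lneg: "lam < 0" by simp
    define k where "k = sqrt (- lam)"
    have k: "k > 0" using lneg k_def by simp
    have kk: "k * k = - lam" using lneg k_def by (simp add: real_sqrt_mult_self)
    define phi where "phi L x = sinh (k * (L - x)) / k" for L x :: real
    define phi' where "phi' L x = - cosh (k * (L - x))" for L x :: real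
    have d1: "(phi L has_real_derivative phi' L x) (at x)" for L x
    proof -
      have i: "((\<lambda>x. k * (L - x)) has_real_derivative (- k)) (at x)"
        by (auto intro!: derivative_eq_intros)
      have "((\<lambda>x. sinh (k * (L - x))) has_real_derivative cosh (k * (L - x)) * (- k)) (at x)"
        by (rule has_field_derivative_sinh[OF i])
      then have "((\<lambda>x. sinh (k * (L - x)) / k) has_real_derivative (cosh (k * (L - x)) * (- k)) / k) (at x)"
        by (rule DERIV_cdivide)
      then show ?thesis using k unfolding phi_def[abs_def] phi'_def[abs_def] by simp
    qed
    have d2: "(phi' L has_real_derivative (- lam * phi L x)) (at x)" for L x
    proof -
      have i: "((\<lambda>x. k * (L - x)) has_real_derivative (- k)) (at x)"
        by (auto intro!: derivative_eq_intros)
      have "((\<lambda>x. cosh (k * (L - x))) has_real_derivative sinh (k * (L - x)) * (- k)) (at x)"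
        by (rule has_field_derivative_cosh[OF i])
      then have "((\<lambda>x. - cosh (k * (L - x))) has_real_derivative - (sinh (k * (L - x)) * (- k))) (at x)"
        by (rule DERIV_minus)
      moreover have "- (sinh (k * (L - x)) * (- k)) = - lam * phi L x"
      proof -
        have "- lam * phi L x = (k * k) * (sinh (k * (L - x)) / k)" using kk unfolding phi_def by simp
        also have "\<dots> = k * sinh (k * (L - x))" using k by simp
        finally show ?thesis by simp
      qed
      ultimately show ?thesis unfolding phi'_def[abs_def] by simp
    qed
    have p: "\<forall>L x. (phi L has_real_derivative phi' L x) (at x) \<and>
                 (phi' L has_real_derivative (- lam * phi L x)) (at x)"
      using d1 d2 by blast
    have pL: "\<forall>L. phi L L = 0 \<and> phi' L L = -1" unfolding phi_def phi'_def by simp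
    obtain a where A: "\<forall>j\<le>s. a j * phi (edge_len eps j) 0 = a 0 * phi 1 0"
      "(\<Sum>j\<le>s. a j * phi' (edge_len eps j) 0) = 0" "\<exists>j\<le>s. a j \<noteq> 0"
      using eig_structure[OF eps ef p pL] by blast
    have "\<forall>j\<le>s. a j = 0"
    proof (rule sign_lemma[where p="\<lambda>j. phi (edge_len eps j) 0" and q="\<lambda>j. phi' (edge_len eps j) 0"])
      show "\<forall>j\<le>s. 0 < phi (edge_len eps j) 0" using Lp k unfolding phi_def by simp
      show "\<forall>j\<le>s. phi' (edge_len eps j) 0 < 0" unfolding phi'_def by simp
    qed (rule A(1), rule A(2))
    with A(3) show False by blast
  qed
qed

definition Gf :: "real \<Rightarrow> nat \<Rightarrow> real \<Rightarrow> real" where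
  "Gf eps s k = cos k * sin (k*eps) + real s * sin k * cos (k*eps)"

lemma G_sin:
  assumes "Gf eps s k = 0" "sin (k*eps) \<noteq> 0" shows "sin k \<noteq> 0"
proof
  assume "sin k = 0"
  then have "(cos k)^2 = 1" using sin_cos_squared_add[of k] by simp
  then have "cos k \<noteq> 0" by auto
  with assms \<open>sin k = 0\<close> show False unfolding Gf_def by simp
qed

lemma sin_phi:
  fixes k :: real assumes k: "k > 0"
  defines "phi \<equiv> \<lambda>L x. sin (k * (L - x)) / k"
  defines "phi' \<equiv> \<lambda>L x. - cos (k * (L - x))"
  shows "\<forall>L x. (phi L has_real_derivative phi' L x) (at x) \<and>
                 (phi' L has_real_derivative (- (k^2) * phi L x)) (at x)"
    and "\<forall>L. phi L L = 0 \<and> phi' L L = -1"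
proof -
  have d1: "(phi L has_real_derivative phi' L x) (at x)" for L x
  proof -
    have i: "((\<lambda>x. k * (L - x)) has_real_derivative (- k)) (at x)"
      by (auto intro!: derivative_eq_intros)
    have "((\<lambda>x. sin (k * (L - x))) has_real_derivative cos (k * (L - x)) * (- k)) (at x)"
      by (rule DERIV_chain2[OF DERIV_sin i])
    then have "((\<lambda>x. sin (k * (L - x)) / k) has_real_derivative (cos (k * (L - x)) * (- k)) / k) (at x)"
      by (rule DERIV_cdivide)
    then show ?thesis using k unfolding phi_def phi'_def by simp
  qed
  have d2: "(phi' L has_real_derivative (- (k^2) * phi L x)) (at x)" for L x
  proof -
    have i: "((\<lambda>x. k * (L - x)) has_real_derivative (- k)) (at x)"
      by (auto intro!: derivative_eq_intros)
    have "((\<lambda>x. cos (k * (L - x))) has_real_derivative - sin (k * (L - x)) * (- k)) (at x)"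
      by (rule DERIV_chain2[OF DERIV_cos i])
    then have "((\<lambda>x. - cos (k * (L - x))) has_real_derivative - (- sin (k * (L - x)) * (- k))) (at x)"
      by (rule DERIV_minus)
    moreover have "- (- sin (k * (L - x)) * (- k)) = - (k^2) * phi L x"
      using k unfolding phi_def by (simp add: power2_eq_square)
    ultimately show ?thesis unfolding phi'_def by simp
  qed
  show "\<forall>L x. (phi L has_real_derivative phi' L x) (at x) \<and>
                 (phi' L has_real_derivative (- (k^2) * phi L x)) (at x)"
    using d1 d2 by blast
  show "\<forall>L. phi L L = 0 \<and> phi' L L = -1" unfolding phi_def phi'_def by simp
qed

lemma pos_eig:
  assumes s: "s \<ge> 1" and eps: "eps > 0" and k: "k > 0" "k*eps < pi"
    and ef: "star_eigenfunction s eps (k^2) f"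
  shows "Gf eps s k = 0 \<and> (\<exists>a0 b. a0 \<noteq> 0 \<and> b \<noteq> 0 \<and> b * sin (k*eps) = a0 * sin k
     \<and> (\<forall>x\<in>{0..1}. f 0 x = a0 * sin (k*(1-x)))
     \<and> (\<forall>j\<in>{1..s}. \<forall>x\<in>{0..eps}. f j x = b * sin (k*(eps-x))))"
proof -
  define phi where "phi = (\<lambda>L x. sin (k * (L - x)) / k)"
  define phi' where "phi' = (\<lambda>L x. - cos (k * (L - x)))"
  have P1: "\<forall>L x. (phi L has_real_derivative phi' L x) (at x) \<and>
                 (phi' L has_real_derivative (- (k^2) * phi L x)) (at x)"
    unfolding phi_def phi'_def using sin_phi(1)[OF k(1)] by simp
  have P2: "\<forall>L. phi L L = 0 \<and> phi' L L = -1"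
    unfolding phi_def phi'_def by simp
  from eig_structure[OF eps ef P1 P2] obtain a where
    AA: "(\<forall>j\<le>s. \<forall>x\<in>{0..edge_len eps j}. f j x = a j * phi (edge_len eps j) x)
     \<and> (\<forall>j\<le>s. a j * phi (edge_len eps j) 0 = a 0 * phi 1 0)
     \<and> (\<Sum>j\<le>s. a j * phi' (edge_len eps j) 0) = 0
     \<and> (\<exists>j\<le>s. a j \<noteq> 0)" by (rule exE)
  note A0 = AA[THEN conjunct1]
  note A1 = AA[THEN conjunct2, THEN conjunct1]
  note A2 = AA[THEN conjunct2, THEN conjunct2, THEN conjunct1]
  note A3 = AA[THEN conjunct2, THEN conjunct2, THEN conjunct2]
  have el: "edge_len eps j = eps" if "j \<in> {1..s}" for j using that by (simp add: edge_len_def)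
  have e0: "edge_len eps 0 = 1" by (simp add: edge_len_def)
  have kep: "0 < k*eps" using k(1) eps by (rule mult_pos_pos)
  have se: "sin (k*eps) > 0" using kep k(2) by (rule sin_gt_zero)
  have aj: "a j * sin (k*eps) = a 0 * sin k" if j: "j \<in> {1..s}" for j
  proof -
    have jj: "j \<le> s" using j by simp
    have "a j * phi (edge_len eps j) 0 = a 0 * phi 1 0" using A1 jj by blast
    then have "a j * phi eps 0 = a 0 * phi 1 0" unfolding el[OF j] .
    then have "a j * (sin (k*eps) / k) = a 0 * (sin k / k)" unfolding phi_def by simp
    then show ?thesis using k by (simp add: field_simps)
  qed
  have one: "1 \<in> {1..s}" using s by simp
  have ajeq: "a j = a 1" if j: "j \<in> {1..s}" for j
  proof -
    have "a j * sin (k*eps) = a 1 * sin (k*eps)" using aj[OF j] aj[OF one] by simp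
    then show ?thesis using se by simp
  qed
  have spl: "{..s} = insert 0 {1..s}" by auto
  have "(\<Sum>j\<le>s. a j * phi' (edge_len eps j) 0) =
      a 0 * phi' 1 0 + (\<Sum>j\<in>{1..s}. a j * phi' (edge_len eps j) 0)"
    unfolding spl by (subst sum.insert) (simp_all add: e0)
  also have "(\<Sum>j\<in>{1..s}. a j * phi' (edge_len eps j) 0) = (\<Sum>j\<in>{1..s}. a 1 * phi' eps 0)"
  proof (rule sum.cong)
    fix j assume j: "j \<in> {1..s}"
    show "a j * phi' (edge_len eps j) 0 = a 1 * phi' eps 0" unfolding ajeq[OF j] el[OF j] ..
  qed simp
  also have "\<dots> = real s * (a 1 * phi' eps 0)" by simp
  finally have K: "a 0 * cos k + real s * a 1 * cos (k*eps) = 0"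
    using A2 unfolding phi'_def by simp
  have a0G: "a 0 * Gf eps s k = 0"
  proof -
    have "a 0 * Gf eps s k = sin (k*eps) * (a 0 * cos k) + real s * cos (k*eps) * (a 0 * sin k)"
      unfolding Gf_def by (simp add: algebra_simps)
    also have "\<dots> = sin (k*eps) * (a 0 * cos k) + real s * cos (k*eps) * (a 1 * sin (k*eps))"
      using aj[OF one] by simp
    also have "\<dots> = sin (k*eps) * (a 0 * cos k + real s * a 1 * cos (k*eps))"
      by (simp add: algebra_simps)
    also have "\<dots> = 0" using K by simp
    finally show ?thesis .
  qed
  have a0: "a 0 \<noteq> 0"
  proof
    assume "a 0 = 0"
    then have "a 1 = 0" using aj[OF one] se by simp
    have "a j = 0" if j: "j \<le> s" for j
    proof (cases "j = 0")
      case True then show ?thesis using \<open>a 0 = 0\<close> by simp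
    next
      case False
      then have jj: "j \<in> {1..s}" using j by simp
      show ?thesis unfolding ajeq[OF jj] by (rule \<open>a 1 = 0\<close>)
    qed
    with A3 show False by blast
  qed
  have a1: "a 1 \<noteq> 0"
  proof
    assume "a 1 = 0"
    have "a 0 * sin k = 0" using aj[OF one] \<open>a 1 = 0\<close> by simp
    moreover have "a 0 * cos k = 0" using K \<open>a 1 = 0\<close> by simp
    ultimately have "sin k = 0" "cos k = 0" using a0 by simp_all
    then show False using sin_cos_squared_add[of k] by simp
  qed
  show ?thesis
  proof (rule conjI)
    show "Gf eps s k = 0" using a0G a0 by simp
  next
  show "\<exists>a0 b. a0 \<noteq> 0 \<and> b \<noteq> 0 \<and> b * sin (k*eps) = a0 * sin k
     \<and> (\<forall>x\<in>{0..1}. f 0 x = a0 * sin (k*(1-x)))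
     \<and> (\<forall>j\<in>{1..s}. \<forall>x\<in>{0..eps}. f j x = b * sin (k*(eps-x)))"
  proof (rule exI[of _ "a 0 / k"], rule exI[of _ "a 1 / k"], intro conjI)
    show "a 0 / k \<noteq> 0" using a0 k by simp
    show "a 1 / k \<noteq> 0" using a1 k by simp
    have "a 1 * sin (k * eps) / k = a 0 * sin k / k" using aj[OF one] by simp
    then show "a 1 / k * sin (k * eps) = a 0 / k * sin k" by simp
    show "\<forall>x\<in>{0..1}. f 0 x = a 0 / k * sin (k * (1 - x))"
    proof
      fix x :: real assume x: "x \<in> {0..1}"
      have x0: "x \<in> {0..edge_len eps 0}" using x unfolding e0 .
      have "f 0 x = a 0 * phi (edge_len eps 0) x" using A0[rule_format, OF le0 x0] .
      then show "f 0 x = a 0 / k * sin (k * (1 - x))" unfolding e0 phi_def by simp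
    qed
    show "\<forall>j\<in>{1..s}. \<forall>x\<in>{0..eps}. f j x = a 1 / k * sin (k * (eps - x))"
    proof (intro ballI)
      fix j x assume j: "j \<in> {1..s}" and x: "x \<in> {0..eps}"
      have "j \<le> s" using j by simp
      have xj: "x \<in> {0..edge_len eps j}" using x unfolding el[OF j] .
      have "f j x = a j * phi (edge_len eps j) x" using A0[rule_format, OF \<open>j \<le> s\<close> xj] .
      then show "f j x = a 1 / k * sin (k * (eps - x))" using ajeq[OF j] el[OF j] unfolding phi_def by simp
    qed
  qed
qed
qed

lemma sin_derivs:
  fixes c k L x :: real
  shows "((\<lambda>x. c * sin (k*(L-x))) has_real_derivative - c * k * cos (k*(L-x))) (at x)"
    and "((\<lambda>x. - c * k * cos (k*(L-x))) has_real_derivative - (k^2) * (c * sin (k*(L-x)))) (at x)"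
proof -
  have i: "((\<lambda>x. k * (L - x)) has_real_derivative (- k)) (at x)"
    by (auto intro!: derivative_eq_intros)
  have "((\<lambda>x. sin (k * (L - x))) has_real_derivative cos (k * (L - x)) * (- k)) (at x)"
    by (rule DERIV_chain2[OF DERIV_sin i])
  then have "((\<lambda>x. c * sin (k * (L - x))) has_real_derivative c * (cos (k * (L - x)) * (- k))) (at x)"
    by (rule DERIV_cmult)
  moreover have "c * (cos (k * (L - x)) * (- k)) = - c * k * cos (k*(L-x))" by simp
  ultimately show "((\<lambda>x. c * sin (k*(L-x))) has_real_derivative - c * k * cos (k*(L-x))) (at x)"
    by (rule DERIV_cong)
  have "((\<lambda>x. cos (k * (L - x))) has_real_derivative - sin (k * (L - x)) * (- k)) (at x)"
    by (rule DERIV_chain2[OF DERIV_cos i])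
  then have "((\<lambda>x. (- c * k) * cos (k * (L - x))) has_real_derivative (- c * k) * (- sin (k * (L - x)) * (- k))) (at x)"
    by (rule DERIV_cmult)
  moreover have "(- c * k) * (- sin (k * (L - x)) * (- k)) = - (k^2) * (c * sin (k*(L-x)))"
    by (simp add: power2_eq_square)
  ultimately show "((\<lambda>x. - c * k * cos (k*(L-x))) has_real_derivative - (k^2) * (c * sin (k*(L-x)))) (at x)"
    by (rule DERIV_cong)
qed

lemma pos_exists:
  assumes eps: "eps > 0" and k: "k > 0" "k*eps < pi" and G: "Gf eps s k = 0"
  shows "star_eigenvalue s eps (k^2)"
proof -
  define cc where "cc j = (if j = 0 then sin (k*eps) else sin k)" for j :: nat
  define f where "f j x = cc j * sin (k * (edge_len eps j - x))" for j x
  define f' where "f' j x = - cc j * k * cos (k * (edge_len eps j - x))" for j x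
  have kep: "0 < k*eps" using k(1) eps by (rule mult_pos_pos)
  have se: "sin (k*eps) > 0" using kep k(2) by (rule sin_gt_zero)
  have sk: "sin k \<noteq> 0" using G_sin[OF G] se by simp
  have e0: "edge_len eps 0 = 1" by (simp add: edge_len_def)
  have el: "edge_len eps j = eps" if "j \<noteq> 0" for j using that by (simp add: edge_len_def)
  have "star_eigenfunction s eps (k^2) f"
    unfolding star_eigenfunction_def
  proof (intro conjI exI[of _ f'])
    show "\<forall>j\<le>s. \<forall>x\<in>{0..edge_len eps j}.
       (f j has_real_derivative f' j x) (at x within {0..edge_len eps j}) \<and>
       (f' j has_real_derivative - (k\<^sup>2) * f j x) (at x within {0..edge_len eps j})"
    proof (intro allI impI ballI conjI)
      fix j x
      have "f j = (\<lambda>x. cc j * sin (k * (edge_len eps j - x)))" by (simp add: f_def[abs_def])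
      moreover have "f' j = (\<lambda>x. - cc j * k * cos (k * (edge_len eps j - x)))" by (simp add: f'_def[abs_def])
      ultimately have a: "(f j has_real_derivative f' j x) (at x)"
        and b: "(f' j has_real_derivative - (k\<^sup>2) * f j x) (at x)"
        using sin_derivs[of "cc j" k "edge_len eps j" x] by (simp_all add: f_def)
      show "(f j has_real_derivative f' j x) (at x within {0..edge_len eps j})"
        using a by (rule has_field_derivative_at_within)
      show "(f' j has_real_derivative - (k\<^sup>2) * f j x) (at x within {0..edge_len eps j})"
        using b by (rule has_field_derivative_at_within)
    qed
    show "\<forall>j\<le>s. f j (edge_len eps j) = 0" by (simp add: f_def)
    show "\<forall>j\<le>s. f j 0 = f 0 0"
    proof (intro allI impI)
      fix j assume "j \<le> s"
      show "f j 0 = f 0 0"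
      proof (cases "j = 0")
        case False
        then show ?thesis unfolding f_def cc_def using el[OF False] e0 by simp
      qed simp
    qed
    have spl: "{..s} = insert 0 {1..s}" by auto
    have "(\<Sum>j\<le>s. f' j 0) = f' 0 0 + (\<Sum>j\<in>{1..s}. f' j 0)"
      unfolding spl by (subst sum.insert) simp_all
    also have "(\<Sum>j\<in>{1..s}. f' j 0) = (\<Sum>j\<in>{1..s}. - sin k * k * cos (k * eps))"
    proof (rule sum.cong)
      fix j :: nat assume "j \<in> {1..s}"
      then have j: "j \<noteq> 0" by simp
      show "f' j 0 = - sin k * k * cos (k * eps)" unfolding f'_def cc_def using el[OF j] j by simp
    qed simp
    also have "f' 0 0 = - sin (k*eps) * k * cos k" unfolding f'_def cc_def e0 by simp
    finally have "(\<Sum>j\<le>s. f' j 0) = - k * Gf eps s k"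
      unfolding Gf_def by (simp add: algebra_simps)
    then show "(\<Sum>j\<le>s. f' j 0) = 0" using G by simp
    show "\<exists>j\<le>s. \<exists>x\<in>{0..edge_len eps j}. f j x \<noteq> 0"
    proof (intro exI[of _ 0] conjI bexI[of _ 0])
      show "f 0 0 \<noteq> 0" unfolding f_def cc_def e0 using se sk by simp
      show "(0::real) \<in> {0..edge_len eps 0}" unfolding e0 by simp
    qed simp
  qed
  then show ?thesis unfolding star_eigenvalue_def by blast
qed

lemma ivt_neg:
  fixes g :: "real \<Rightarrow> real"
  assumes "continuous_on {a..b} g" "a \<le> b" "g a * g b < 0"
  shows "\<exists>x. a < x \<and> x < b \<and> g x = 0"
proof -
  have ga: "g a \<noteq> 0" and gb: "g b \<noteq> 0" using assms(3) by auto
  have "\<exists>x. a \<le> x \<and> x \<le> b \<and> g x = 0"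
  proof (cases "g a < 0")
    case True
    then have "g b > 0" using assms(3) by (simp add: mult_less_0_iff)
    then show ?thesis using IVT'[of g a 0 b] True assms(1,2) by simp
  next
    case False
    then have "g a > 0" using ga by simp
    then have "g b < 0" using assms(3) by (simp add: mult_less_0_iff)
    then show ?thesis using IVT2'[of g b 0 a] \<open>g a > 0\<close> assms(1,2) by simp
  qed
  then obtain x where "a \<le> x" "x \<le> b" "g x = 0" by blast
  moreover have "x \<noteq> a" "x \<noteq> b" using ga gb \<open>g x = 0\<close> by auto
  ultimately show ?thesis by force
qed

lemma Gf_cont: "continuous_on A (Gf eps s)"
  unfolding Gf_def[abs_def] by (intro continuous_intros)

lemma root_exists:
  assumes s: "s \<ge> 1" and eps: "eps > 0" and eps1: "real (Suc m) * eps < 1"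
  shows "\<exists>k. real m * pi < k \<and> k < real (Suc m) * pi \<and> Gf eps s k = 0"
proof (cases "m = 0")
  case True
  have e1: "eps < 1" using eps1 True by simp
  have "\<exists>x. pi/2 < x \<and> x < pi \<and> Gf eps s x = 0"
  proof (rule ivt_neg[OF Gf_cont])
    show "pi / 2 \<le> pi" by simp
    have "0 < pi/2 * eps" using eps by simp
    then have c1: "- (pi/2) < pi/2 * eps" using pi_gt_zero by linarith
    have c2: "pi/2 * eps < pi/2" using e1 by simp
    have "cos (pi/2 * eps) > 0" using c1 c2 by (rule cos_gt_zero_pi)
    moreover have "real s > 0" using s by simp
    ultimately have gp: "Gf eps s (pi/2) > 0" unfolding Gf_def by (simp add: mult.commute)
    have c3: "0 < pi * eps" using eps by simp
    have c4: "pi * eps < pi" using e1 by simp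
    have s0: "sin (pi * eps) > 0" using c3 c4 by (rule sin_gt_zero)
    then have gn: "Gf eps s pi < 0" unfolding Gf_def by simp
    show "Gf eps s (pi / 2) * Gf eps s pi < 0" using gp gn by (rule mult_pos_neg)
  qed
  then obtain x where "pi/2 < x" "x < pi" "Gf eps s x = 0" by blast
  moreover have "0 < pi/2" by simp
  ultimately show ?thesis using True by (intro exI[of _ x]) auto
next
  case False
  have g1: "Gf eps s (real m * pi) = (-1)^m * sin (real m * pi * eps)"
    unfolding Gf_def by simp
  have g2: "Gf eps s (real (Suc m) * pi) = (-1)^(Suc m) * sin (real (Suc m) * pi * eps)"
    unfolding Gf_def by (simp only: cos_npi sin_npi)
  have p1: "sin (real m * pi * eps) > 0"
  proof (rule sin_gt_zero)
    show "0 < real m * pi * eps" using False eps by simp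
    have "real m * eps < 1" using eps1 eps by (simp add: algebra_simps)
    then show "real m * pi * eps < pi" by (simp add: mult.commute mult.left_commute)
  qed
  have p2: "sin (real (Suc m) * pi * eps) > 0"
  proof (rule sin_gt_zero)
    show "0 < real (Suc m) * pi * eps" using eps by simp
    have "real (Suc m) * eps < 1" using eps1 by simp
    then show "real (Suc m) * pi * eps < pi" by (simp add: mult.commute mult.left_commute)
  qed
  have "Gf eps s (real m * pi) * Gf eps s (real (Suc m) * pi)
      = - (sin (real m * pi * eps) * sin (real (Suc m) * pi * eps))"
    unfolding g1 g2 by (simp add: power2_eq_square[symmetric] power_mult_distrib[symmetric])
  also have "\<dots> < 0" using p1 p2 by simp
  finally have neg: "Gf eps s (real m * pi) * Gf eps s (real (Suc m) * pi) < 0" .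
  have "real m * pi \<le> real (Suc m) * pi" by simp
  from ivt_neg[OF Gf_cont this neg] show ?thesis .
qed

lemma cot_decr:
  fixes a b :: real
  assumes "sin a * sin b > 0" "0 < b - a" "b - a < pi"
  shows "cos b / sin b < cos a / sin a"
proof -
  have na: "sin a \<noteq> 0" and nb: "sin b \<noteq> 0" using assms(1) by auto
  have "cos a / sin a - cos b / sin b = sin (b - a) / (sin a * sin b)"
    using na nb by (simp add: sin_diff field_simps)
  moreover have "sin (b - a) > 0" using assms(2,3) by (rule sin_gt_zero)
  ultimately have "cos a / sin a - cos b / sin b > 0" using assms(1) by simp
  then show ?thesis by simp
qed

lemma sin_same_interval:
  fixes k1 k2 :: real
  assumes "real m * pi < k1" "k1 < real (Suc m) * pi" "real m * pi < k2" "k2 < real (Suc m) * pi"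
  shows "sin k1 * sin k2 > 0"
proof -
  have sq1: "(-1::real)^m * (-1)^m = 1" by (induct m) simp_all
  have sh: "sin k = (-1)^m * sin (k - real m * pi)" for k
  proof -
    have "sin (k - real m * pi) = (-1)^m * sin k" by (simp add: sin_diff)
    then show ?thesis by (simp add: mult.assoc[symmetric] sq1)
  qed
  have "sin (k1 - real m * pi) > 0" using assms(1,2) by (intro sin_gt_zero) (auto simp: algebra_simps)
  moreover have "sin (k2 - real m * pi) > 0" using assms(3,4) by (intro sin_gt_zero) (auto simp: algebra_simps)
  moreover have "sin k1 * sin k2 = ((-1)^m)^2 * (sin (k1 - real m * pi) * sin (k2 - real m * pi))"
    by (subst (1 2) sh) (simp add: power2_eq_square algebra_simps)
  moreover have "((-1::real)^m)^2 = 1" using sq1 by (simp add: power2_eq_square)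
  ultimately show ?thesis by simp
qed

lemma G_cot:
  assumes "Gf eps s k = 0" "sin k \<noteq> 0" "sin (k*eps) \<noteq> 0"
  shows "cos k / sin k + real s * (cos (k*eps) / sin (k*eps)) = 0"
proof -
  have "cos k / sin k + real s * (cos (k*eps) / sin (k*eps)) = Gf eps s k / (sin k * sin (k*eps))"
    using assms(2,3) unfolding Gf_def by (simp add: field_simps)
  then show ?thesis using assms(1) by simp
qed

lemma root_unique_aux:
  assumes eps: "eps > 0"
    and r1: "real m * pi < k1" "k1 < real (Suc m) * pi" and r2: "real m * pi < k2" "k2 < real (Suc m) * pi"
    and e1: "k1 * eps < pi" and e2: "k2 * eps < pi" and k1pos: "k1 > 0"
    and G1: "Gf eps s k1 = 0" and G2: "Gf eps s k2 = 0" and lt: "k1 < k2"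
  shows False
proof -
  have k2pos: "k2 > 0" using k1pos lt by simp
  have se1: "sin (k1*eps) > 0" using k1pos eps e1 by (intro sin_gt_zero) auto
  have se2: "sin (k2*eps) > 0" using k2pos eps e2 by (intro sin_gt_zero) auto
  have ss: "sin k1 * sin k2 > 0" using r1 r2 by (rule sin_same_interval)
  then have sk1: "sin k1 \<noteq> 0" and sk2: "sin k2 \<noteq> 0" by auto
  have c1: "cos k2 / sin k2 < cos k1 / sin k1"
    using ss by (rule cot_decr) (use r1 r2 lt in \<open>auto simp: algebra_simps\<close>)
  have "k2 * eps - k1 * eps = (k2 - k1) * eps" by (simp add: algebra_simps)
  then have d: "0 < k2 * eps - k1 * eps" using lt eps by simp
  have c2: "cos (k2*eps) / sin (k2*eps) < cos (k1*eps) / sin (k1*eps)"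
    using mult_pos_pos[OF se1 se2] d by (rule cot_decr) (use e2 se1 k1pos eps in \<open>smt (verit) mult_pos_pos\<close>)
  have "real s * (cos (k2*eps) / sin (k2*eps)) \<le> real s * (cos (k1*eps) / sin (k1*eps))"
    using c2 by (intro mult_left_mono) auto
  with c1 have "cos k2 / sin k2 + real s * (cos (k2*eps) / sin (k2*eps)) <
      cos k1 / sin k1 + real s * (cos (k1*eps) / sin (k1*eps))" by linarith
  then show False using G_cot[OF G1 sk1] G_cot[OF G2 sk2] se1 se2 by simp
qed

lemma root_unique:
  assumes eps: "eps > 0"
    and r1: "real m * pi < k1" "k1 < real (Suc m) * pi" and r2: "real m * pi < k2" "k2 < real (Suc m) * pi"
    and e1: "k1 * eps < pi" and e2: "k2 * eps < pi"
    and G1: "Gf eps s k1 = 0" and G2: "Gf eps s k2 = 0"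
  shows "k1 = k2"
proof -
  have p1: "k1 > 0" using r1(1) by (smt (verit) of_nat_0_le_iff pi_gt_zero mult_nonneg_nonneg)
  have p2: "k2 > 0" using r2(1) by (smt (verit) of_nat_0_le_iff pi_gt_zero mult_nonneg_nonneg)
  show ?thesis
  proof (rule linorder_cases[of k1 k2])
    assume "k1 < k2" then show ?thesis using root_unique_aux[OF eps r1 r2 e1 e2 p1 G1 G2] by blast
  next
    assume "k2 < k1" then show ?thesis using root_unique_aux[OF eps r2 r1 e2 e1 p2 G2 G1] by blast
  qed
qed

lemma zero_set:
  assumes k: "real m * pi < k" "k < real (Suc m) * pi" and a0: "a0 \<noteq> 0"
  shows "{x. 0 < x \<and> x < 1 \<and> a0 * sin (k*(1-x)) = 0} = (\<lambda>i. 1 - real i * pi / k) ` {1..m}"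
proof -
  have kp: "k > 0" using k(1) by (smt (verit) of_nat_0_le_iff pi_gt_zero mult_nonneg_nonneg)
  show ?thesis
  proof (rule set_eqI, rule iffI)
    fix x assume "x \<in> {x. 0 < x \<and> x < 1 \<and> a0 * sin (k*(1-x)) = 0}"
    then have x: "0 < x" "x < 1" and sz: "sin (k*(1-x)) = 0" using a0 by auto
    obtain i :: int where i: "k*(1-x) = of_int i * pi" using sz sin_zero_iff_int2 by blast
    have pos: "0 < k*(1-x)" using kp x by simp
    have lt: "k*(1-x) < k" using kp x by simp
    have "0 < of_int i * pi" using pos i by simp
    then have ipos: "i > 0" by (simp add: zero_less_mult_iff)
    have "of_int i * pi < real (Suc m) * pi" using lt k(2) i by linarith
    then have "of_int i < real (Suc m)" by (rule mult_right_less_imp_less) simp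
    then have ile: "i \<le> int m" by linarith
    define j where "j = nat i"
    have ij: "real j = of_int i" using ipos j_def by simp
    have j1: "j \<in> {1..m}" using ipos ile j_def by auto
    have "x = 1 - real j * pi / k" using i ij kp by (simp add: field_simps)
    then show "x \<in> (\<lambda>i. 1 - real i * pi / k) ` {1..m}" using j1 by blast
  next
    fix x assume "x \<in> (\<lambda>i. 1 - real i * pi / k) ` {1..m}"
    then obtain j where j: "j \<in> {1..m}" and xj: "x = 1 - real j * pi / k" by blast
    have "real j * pi > 0" using j by simp
    then have "real j * pi / k > 0" using kp by simp
    then have x1: "x < 1" using xj by simp
    have "real j * pi \<le> real m * pi" using j by simp
    then have "real j * pi < k" using k(1) \<open>real j * pi \<le> real m * pi\<close> by linarith
    then have "real j * pi / k < 1" using kp by simp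
    then have x0: "0 < x" using xj by simp
    have "k * (1 - x) = real j * pi" using xj kp by simp
    then have "sin (k*(1-x)) = 0" by simp
    then show "x \<in> {x. 0 < x \<and> x < 1 \<and> a0 * sin (k*(1-x)) = 0}" using x0 x1 by simp
  qed
qed

lemma zero_card:
  assumes "k > 0"
  shows "card ((\<lambda>i. 1 - real i * pi / k) ` {1..m}) = m"
proof -
  have "inj_on (\<lambda>i. 1 - real i * pi / k) {1..m}"
    using assms by (intro inj_onI) (simp add: field_simps)
  then show ?thesis by (simp add: card_image)
qed

theorem lemma15:
  fixes s M :: nat
  assumes "s \<ge> 1" and "M \<ge> 1"
  shows "\<exists>eps > 0. \<exists>lam :: nat \<Rightarrow> real.
     (\<forall>n\<in>{1..<M}. lam n < lam (Suc n))
   \<and> (\<forall>mu. star_eigenvalue s eps mu \<and> mu \<le> lam M \<longrightarrow> (\<exists>n\<in>{1..M}. mu = lam n))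
   \<and> (\<forall>n\<in>{1..M}. star_simple_eigenvalue s eps (lam n))
   \<and> (\<forall>n\<in>{1..M}. \<forall>f. star_eigenfunction s eps (lam n) f \<longrightarrow>
        (\<forall>\<sigma>. \<sigma> permutes {1..s} \<longrightarrow> (\<forall>j\<in>{1..s}. \<forall>x\<in>{0..eps}. f (\<sigma> j) x = f j x))
      \<and> finite {x. 0 < x \<and> x < 1 \<and> f 0 x = 0}
      \<and> card {x. 0 < x \<and> x < 1 \<and> f 0 x = 0} = n - 1
      \<and> f 0 0 \<noteq> 0
      \<and> (\<forall>j\<in>{1..s}. \<forall>x. 0 \<le> x \<and> x < eps \<longrightarrow> f j x \<noteq> 0))"
proof -
  note s = assms(1)
  define eps :: real where "eps = 1 / (real M + 1)"
  have eps: "eps > 0" unfolding eps_def by simp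
  have epsM: "real M * eps < 1" unfolding eps_def by (simp add: field_simps)
  have ex: "\<forall>n\<in>{1..M}. \<exists>k. real (n - 1) * pi < k \<and> k < real n * pi \<and> Gf eps s k = 0"
  proof
    fix n assume n: "n \<in> {1..M}"
    then obtain m where nm: "n = Suc m" by (cases n) auto
    have "real (Suc m) * eps \<le> real M * eps" using n nm eps by (intro mult_right_mono) auto
    then have "real (Suc m) * eps < 1" using epsM by linarith
    from root_exists[OF s eps this] show "\<exists>k. real (n - 1) * pi < k \<and> k < real n * pi \<and> Gf eps s k = 0"
      using nm by simp
  qed
  then obtain kk where kk: "\<forall>n\<in>{1..M}. real (n - 1) * pi < kk n \<and> kk n < real n * pi \<and> Gf eps s (kk n) = 0"
    by metis
  have kpos: "kk n > 0" if "n \<in> {1..M}" for n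
  proof -
    have "0 \<le> real (n - 1) * pi" by simp
    moreover have "real (n - 1) * pi < kk n" using kk that by blast
    ultimately show ?thesis by linarith
  qed
  have kMpi: "kk n < real M * pi" if "n \<in> {1..M}" for n
  proof -
    have "real n * pi \<le> real M * pi" using that by simp
    moreover have "kk n < real n * pi" using kk that by blast
    ultimately show ?thesis by linarith
  qed
  have keps_gen: "k * eps < pi" if "k < real M * pi" for k
  proof -
    have "k * eps \<le> real M * pi * eps"
    proof (cases "k \<le> real M * pi")
      case True then show ?thesis using eps by (intro mult_right_mono) auto
    qed (use that in simp)
    also have "\<dots> = pi * (real M * eps)" by simp
    also have "\<dots> < pi * 1" using epsM by (intro mult_strict_left_mono) auto
    finally show ?thesis by simp
  qed
  have keps: "kk n * eps < pi" if "n \<in> {1..M}" for n using keps_gen kMpi that by blast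
  define lam where "lam n = (kk n)^2" for n
  have eig_info: "Gf eps s (kk n) = 0 \<and> (\<exists>a0 b. a0 \<noteq> 0 \<and> b \<noteq> 0 \<and> b * sin (kk n*eps) = a0 * sin (kk n)
     \<and> (\<forall>x\<in>{0..1}. f 0 x = a0 * sin (kk n*(1-x)))
     \<and> (\<forall>j\<in>{1..s}. \<forall>x\<in>{0..eps}. f j x = b * sin (kk n*(eps-x))))"
    if n: "n \<in> {1..M}" and ef: "star_eigenfunction s eps (lam n) f" for n f
  proof -
    have "star_eigenfunction s eps ((kk n)^2) f" using ef unfolding lam_def .
    then show ?thesis by (rule pos_eig[OF s eps kpos[OF n] keps[OF n]])
  qed
  have se: "sin (kk n * eps) > 0" if n: "n \<in> {1..M}" for n
    using mult_pos_pos[OF kpos[OF n] eps] keps[OF n] by (rule sin_gt_zero)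
  have skn: "sin (kk n) \<noteq> 0" if n: "n \<in> {1..M}" for n
  proof -
    have "Gf eps s (kk n) = 0" using kk n by blast
    then show ?thesis using G_sin se[OF n] by simp
  qed
  show ?thesis
  proof (intro exI[of _ eps] conjI eps exI[of _ lam])
    show "\<forall>n\<in>{1..<M}. lam n < lam (Suc n)"
    proof
      fix n assume n: "n \<in> {1..<M}"
      then have n1: "n \<in> {1..M}" and n2: "Suc n \<in> {1..M}" by auto
      have "kk n < real n * pi" using kk n1 by blast
      also have "real n * pi = real (Suc n - 1) * pi" by simp
      also have "\<dots> < kk (Suc n)" using kk n2 by blast
      finally have "kk n < kk (Suc n)" .
      then show "lam n < lam (Suc n)" unfolding lam_def
        using kpos[OF n1] by (intro power_strict_mono) auto
    qed
    show "\<forall>mu. star_eigenvalue s eps mu \<and> mu \<le> lam M \<longrightarrow> (\<exists>n\<in>{1..M}. mu = lam n)"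
    proof (intro allI impI)
      fix mu assume H: "star_eigenvalue s eps mu \<and> mu \<le> lam M"
      then have "\<exists>f. star_eigenfunction s eps mu f" unfolding star_eigenvalue_def by simp
      then obtain f where ef: "star_eigenfunction s eps mu f" by (rule exE)
      have mupos: "mu > 0" using nonpos_not_eig[OF eps, of mu s f] ef by linarith
      define k where "k = sqrt mu"
      have kp: "k > 0" using mupos k_def by simp
      have k2: "k^2 = mu" using mupos k_def by simp
      have M1: "M \<in> {1..M}" using assms(2) by simp
      have "k^2 \<le> (kk M)^2" using H k2 unfolding lam_def by simp
      then have "k \<le> kk M" using kpos[OF M1] power2_le_imp_le[of k "kk M"] by simp
      then have kM: "k < real M * pi" using kMpi[OF M1] by linarith
      have ke: "k * eps < pi" using keps_gen[OF kM] .
      have ef2: "star_eigenfunction s eps (k^2) f" using ef k2 by simp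
      have Gk: "Gf eps s k = 0" by (rule conjunct1[OF pos_eig[OF s eps kp ke ef2]])
      have sek: "sin (k*eps) > 0" using mult_pos_pos[OF kp eps] ke by (rule sin_gt_zero)
      have sk: "sin k \<noteq> 0" using G_sin[OF Gk] sek by simp
      define m where "m = nat \<lfloor>k / pi\<rfloor>"
      have fl0: "\<lfloor>k / pi\<rfloor> \<ge> 0" using kp by simp
      have m1: "real m \<le> k / pi" using fl0 m_def by simp
      have m2: "k / pi < real m + 1" using fl0 m_def by linarith
      have m3: "real m \<noteq> k / pi"
      proof
        assume "real m = k / pi"
        then have "k = real m * pi" by simp
        then show False using sk by simp
      qed
      have r1: "real m * pi < k" using m1 m3 by (simp add: field_simps)
      have r2: "k < real (Suc m) * pi" using m2 by (simp add: field_simps)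
      have mM: "m < M"
      proof -
        have "real m * pi < real M * pi" using r1 kM by linarith
        then show ?thesis by simp
      qed
      define n where "n = Suc m"
      have n: "n \<in> {1..M}" using mM n_def by simp
      have kkn: "real (n - 1) * pi < kk n \<and> kk n < real n * pi \<and> Gf eps s (kk n) = 0"
        using kk n by blast
      have kn1: "real m * pi < kk n" and kn2: "kk n < real (Suc m) * pi" and Gn: "Gf eps s (kk n) = 0"
        using kkn unfolding n_def by simp_all
      have "k = kk n" using root_unique[OF eps r1 r2 kn1 kn2 ke keps[OF n] Gk Gn] .
      then have "mu = lam n" using k2 unfolding lam_def by simp
      then show "\<exists>n\<in>{1..M}. mu = lam n" using n by blast
    qed
    show "\<forall>n\<in>{1..M}. star_simple_eigenvalue s eps (lam n)"
    proof
      fix n assume n: "n \<in> {1..M}"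
      have ev: "star_eigenvalue s eps (lam n)"
        using pos_exists[OF eps kpos[OF n] keps[OF n]] kk n unfolding lam_def by blast
      show "star_simple_eigenvalue s eps (lam n)"
        unfolding star_simple_eigenvalue_def
      proof (intro conjI ev allI impI)
        fix f g assume ef: "star_eigenfunction s eps (lam n) f" and eg: "star_eigenfunction s eps (lam n) g"
        obtain a0 b where fa: "a0 \<noteq> 0" "b * sin (kk n*eps) = a0 * sin (kk n)"
          "\<forall>x\<in>{0..1}. f 0 x = a0 * sin (kk n*(1-x))"
          "\<forall>j\<in>{1..s}. \<forall>x\<in>{0..eps}. f j x = b * sin (kk n*(eps-x))"
          using eig_info[OF n ef] by blast
        obtain a0' b' where ga: "b' * sin (kk n*eps) = a0' * sin (kk n)"
          "\<forall>x\<in>{0..1}. g 0 x = a0' * sin (kk n*(1-x))"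
          "\<forall>j\<in>{1..s}. \<forall>x\<in>{0..eps}. g j x = b' * sin (kk n*(eps-x))"
          using eig_info[OF n eg] by blast
        define c where "c = a0' / a0"
        have ca: "a0' = c * a0" using fa(1) c_def by simp
        have cb: "b' = c * b"
        proof -
          have "b' * sin (kk n*eps) = (c * b) * sin (kk n*eps)"
            using fa(2) ga(1) ca by (simp add: algebra_simps)
          then show ?thesis using se[OF n] by simp
        qed
        show "\<exists>c. \<forall>j\<le>s. \<forall>x\<in>{0..edge_len eps j}. g j x = c * f j x"
        proof (intro exI[of _ c] allI impI ballI)
          fix j x assume j: "j \<le> s" and x: "x \<in> {0..edge_len eps j}"
          show "g j x = c * f j x"
          proof (cases "j = 0")
            case True
            then have x1: "x \<in> {0..1}" using x by (simp add: edge_len_def)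
            have "g 0 x = a0' * sin (kk n*(1-x))" using ga(2) x1 by blast
            moreover have "f 0 x = a0 * sin (kk n*(1-x))" using fa(3) x1 by blast
            ultimately show ?thesis using True ca by simp
          next
            case False
            then have x1: "x \<in> {0..eps}" using x by (simp add: edge_len_def)
            have j1: "j \<in> {1..s}" using False j by simp
            have "g j x = b' * sin (kk n*(eps-x))" using ga(3) x1 j1 by blast
            moreover have "f j x = b * sin (kk n*(eps-x))" using fa(4) x1 j1 by blast
            ultimately show ?thesis using cb by simp
          qed
        qed
      qed
    qed
    show "\<forall>n\<in>{1..M}. \<forall>f. star_eigenfunction s eps (lam n) f \<longrightarrow>
        (\<forall>\<sigma>. \<sigma> permutes {1..s} \<longrightarrow> (\<forall>j\<in>{1..s}. \<forall>x\<in>{0..eps}. f (\<sigma> j) x = f j x))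
      \<and> finite {x. 0 < x \<and> x < 1 \<and> f 0 x = 0}
      \<and> card {x. 0 < x \<and> x < 1 \<and> f 0 x = 0} = n - 1
      \<and> f 0 0 \<noteq> 0
      \<and> (\<forall>j\<in>{1..s}. \<forall>x. 0 \<le> x \<and> x < eps \<longrightarrow> f j x \<noteq> 0)"
    proof (intro ballI allI impI)
      fix n f assume n: "n \<in> {1..M}" and ef: "star_eigenfunction s eps (lam n) f"
      obtain a0 b where fa: "a0 \<noteq> 0" "b \<noteq> 0" "b * sin (kk n*eps) = a0 * sin (kk n)"
          "\<forall>x\<in>{0..1}. f 0 x = a0 * sin (kk n*(1-x))"
          "\<forall>j\<in>{1..s}. \<forall>x\<in>{0..eps}. f j x = b * sin (kk n*(eps-x))"
        using eig_info[OF n ef] by blast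
      obtain m where nm: "n = Suc m" using n by (cases n) auto
      have kkn: "real (n - 1) * pi < kk n \<and> kk n < real n * pi"
        using kk n by blast
      have r1: "real m * pi < kk n" and r2: "kk n < real (Suc m) * pi"
        using kkn unfolding nm by simp_all
      have zs: "{x. 0 < x \<and> x < 1 \<and> f 0 x = 0} = {x. 0 < x \<and> x < 1 \<and> a0 * sin (kk n*(1-x)) = 0}"
      proof (rule Collect_cong)
        fix x :: real
        show "(0 < x \<and> x < 1 \<and> f 0 x = 0) = (0 < x \<and> x < 1 \<and> a0 * sin (kk n*(1-x)) = 0)"
        proof (cases "0 < x \<and> x < 1")
          case True
          then have "x \<in> {0..1}" by simp
          then have "f 0 x = a0 * sin (kk n*(1-x))" using fa(4) by blast
          then show ?thesis by simp
        qed blast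
      qed
      have zs2: "{x. 0 < x \<and> x < 1 \<and> f 0 x = 0} = (\<lambda>i. 1 - real i * pi / kk n) ` {1..m}"
        unfolding zs by (rule zero_set[OF r1 r2 fa(1)])
      have P1: "\<forall>\<sigma>. \<sigma> permutes {1..s} \<longrightarrow> (\<forall>j\<in>{1..s}. \<forall>x\<in>{0..eps}. f (\<sigma> j) x = f j x)"
      proof (intro allI impI ballI)
        fix \<sigma> j x assume p: "\<sigma> permutes {1..s}" and j: "j \<in> {1..s}" and x: "x \<in> {0..eps}"
        have sj: "\<sigma> j \<in> {1..s}" using permutes_in_image[OF p] j by blast
        have "f (\<sigma> j) x = b * sin (kk n*(eps-x))" using fa(5) sj x by blast
        moreover have "f j x = b * sin (kk n*(eps-x))" using fa(5) j x by blast
        ultimately show "f (\<sigma> j) x = f j x" by simp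
      qed
      have P2: "finite {x. 0 < x \<and> x < 1 \<and> f 0 x = 0}" unfolding zs2 by simp
      have P3: "card {x. 0 < x \<and> x < 1 \<and> f 0 x = 0} = n - 1"
        unfolding zs2 zero_card[OF kpos[OF n]] using nm by simp
      have "(0::real) \<in> {0..1}" by simp
      then have "f 0 0 = a0 * sin (kk n*(1-0))" using fa(4) by blast
      then have P4: "f 0 0 \<noteq> 0" using fa(1) skn[OF n] by simp
      have P5: "\<forall>j\<in>{1..s}. \<forall>x. 0 \<le> x \<and> x < eps \<longrightarrow> f j x \<noteq> 0"
      proof (intro ballI allI impI)
        fix j x assume j: "j \<in> {1..s}" and x: "0 \<le> x \<and> x < eps"
        have "x \<in> {0..eps}" using x by simp
        then have fx: "f j x = b * sin (kk n*(eps-x))" using fa(5) j by blast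
        have "0 < kk n * (eps - x)" using kpos[OF n] x by simp
        moreover have "kk n * (eps - x) \<le> kk n * eps" using kpos[OF n] x by (simp add: mult_left_mono)
        then have "kk n * (eps - x) < pi" using keps[OF n] by linarith
        ultimately have "sin (kk n*(eps-x)) > 0" by (rule sin_gt_zero)
        then show "f j x \<noteq> 0" using fx fa(2) by simp
      qed
      show "(\<forall>\<sigma>. \<sigma> permutes {1..s} \<longrightarrow> (\<forall>j\<in>{1..s}. \<forall>x\<in>{0..eps}. f (\<sigma> j) x = f j x))
      \<and> finite {x. 0 < x \<and> x < 1 \<and> f 0 x = 0}
      \<and> card {x. 0 < x \<and> x < 1 \<and> f 0 x = 0} = n - 1
      \<and> f 0 0 \<noteq> 0
      \<and> (\<forall>j\<in>{1..s}. \<forall>x. 0 \<le> x \<and> x < eps \<longrightarrow> f j x \<noteq> 0)"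
        by (rule conjI[OF P1 conjI[OF P2 conjI[OF P3 conjI[OF P4 P5]]]])
    qed
  qed
qed

end
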